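(* Let $t\ge0$ with $2t+1\le n$, and let $f\in\mathbf{SB}_n$ be of the form $f=\sigma_{2t+1}+\sum_{i=0}^{2t}\lambda_f(i)\sigma_i$ with $\lambda_f(i)\in\mathbb{F}_2$. Let $g=\sigma_1+\lambda_f(2t)+1$. Then $\deg(gf)\le 2t-1$ (for $t=0$ this means $gf=0$). Moreover: (a) if $\lambda_f(2t)=0$, then $(\sigma_1+1)f=0$ if $\lambda_f(2s)=0$ for all $0\le s\le t-1$, and otherwise $(\sigma_1+1)f$ has degree exactly $2s+1$, where $s$ is the largest index in $\{0,\dots,t-1\}$ with $\lambda_f(2s)=1$; (b) if $\lambda_f(2t)=1$, then $\sigma_1 f=0$ if $\lambda_f(2s)=\lambda_f(2s+1)$ for all $0\le s\le t-1$, and otherwise $\sigma_1f$ has degree exactly $2s+1$, where $s$ is the largest index in $\{0,\dots,t-1\}$ with $\lambda_f(2s)+\lambda_f(2s+1)=1$.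
   Context: $\mathbf{SB}_n$ is the set of symmetric Boolean functions on $n$ variables, $\sigma_i$ the $i$-th elementary symmetric function of $x_1,\dots,x_n$ over $\mathbb{F}_2$ ($\sigma_0=1$). Every $f\in\mathbf{SB}_n$ can be uniquely written $f=\sum_{i=0}^n\lambda_f(i)\sigma_i$ with $\lambda_f(i)\in\mathbb{F}_2$. $\deg$ is the algebraic degree (degree of the algebraic normal form). *)

theory Defs
  imports Main "HOL-Library.Z2"
begin

text \<open>Boolean functions on n variables x_0,...,x_{n-1} over F_2 (type bit) are modelled as
functions h :: nat set \<Rightarrow> bit, where an input vector x is identified with its support
X = {i. x_i = 1} \<subseteq> {0..<n}. Only the values on subsets of {0..<n} are relevant.\<close>

definition sigma :: "nat \<Rightarrow> nat set \<Rightarrow> bit" where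
  "sigma i X = of_nat (card {S. S \<subseteq> X \<and> card S = i})"

text \<open>ANF coefficient of the monomial x_S (Moebius transform).\<close>
definition anf :: "(nat set \<Rightarrow> bit) \<Rightarrow> nat set \<Rightarrow> bit" where
  "anf h S = (\<Sum>T\<in>Pow S. h T)"

definition anf_deg :: "nat \<Rightarrow> (nat set \<Rightarrow> bit) \<Rightarrow> int" where
  "anf_deg n h = (if \<forall>S\<subseteq>{0..<n}. anf h S = 0 then -1
     else int (Max {card S | S. S \<subseteq> {0..<n} \<and> anf h S \<noteq> 0}))"

end

theory Submission
  imports Defs
begin
lemma bin_step: "(m choose (Suc k)) * Suc k = (m choose k) * (m - k)"
proof (cases m)
  case 0 then show ?thesis by simp
next
  case (Suc n)
  then show ?thesis using Suc_times_binomial_eq[of n k] binomial_absorb_comp[of "Suc n" k]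
    by (metis diff_Suc_1 mult.commute)
qed
lemma bitnat: "(of_nat a :: bit) = (if even a then 0 else 1)"
  by (induction a) simp_all
lemma parA: "odd (m choose Suc (2*s)) \<longleftrightarrow> odd m \<and> odd (m choose (2*s))"
proof -
  have "odd ((m choose Suc (2*s)) * Suc (2*s)) \<longleftrightarrow> odd ((m choose (2*s)) * (m - 2*s))"
    by (simp only: bin_step)
  moreover have "m < 2*s \<Longrightarrow> (m choose (2*s)) = 0" by simp
  ultimately show ?thesis by (cases "m < 2*s") (auto simp: binomial_eq_0)
qed
lemma parB: "odd m \<or> even (m choose Suc (2*s))"
proof -
  have "odd ((m choose Suc (Suc (2*s))) * Suc (Suc (2*s))) \<longleftrightarrow> odd ((m choose Suc (2*s)) * (m - Suc (2*s)))"
    by (simp only: bin_step)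
  moreover have "m < Suc (2*s) \<Longrightarrow> (m choose Suc (2*s)) = 0" by simp
  ultimately show ?thesis by (cases "m < Suc (2*s)") (auto simp: binomial_eq_0)
qed
lemma sig_fin: "finite X \<Longrightarrow> sigma i X = of_nat (card X choose i)"
  by (simp add: sigma_def n_subsets)
lemma s1_even: "finite X \<Longrightarrow> sigma 1 X * sigma (2*s) X = sigma (2*s+1) X"
  using parA[of "card X" s] by (simp add: sig_fin bitnat)
lemma s1_odd: "finite X \<Longrightarrow> sigma 1 X * sigma (2*s+1) X = sigma (2*s+1) X"
  using parA[of "card X" s] parB[of "card X" s] by (auto simp add: sig_fin bitnat)

lemma bit_self: "(a::bit) + a = 0" by (cases a) simp_all

lemma sum_Pow_insert:
  assumes "finite S" "x \<notin> S"
  shows "(\<Sum>T\<in>Pow (insert x S). h T) = (\<Sum>T\<in>Pow S. h T) + (\<Sum>T\<in>Pow S. h (insert x T))"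
proof -
  have inj: "inj_on (insert x) (Pow S)" using assms(2) unfolding inj_on_def by (metis Diff_insert_absorb PowD subsetD)
  have disj: "Pow S \<inter> insert x ` Pow S = {}" using assms(2) by blast
  have "(\<Sum>T\<in>Pow (insert x S). h T) = (\<Sum>T\<in>Pow S. h T) + (\<Sum>T\<in>insert x ` Pow S. h T)"
    unfolding Pow_insert using assms(1) disj by (simp add: sum.union_disjoint)
  also have "(\<Sum>T\<in>insert x ` Pow S. h T) = (\<Sum>T\<in>Pow S. h (insert x T))"
    using inj by (simp add: sum.reindex)
  finally show ?thesis .
qed

lemma sigma_insert:
  assumes "finite T" "x \<notin> T"
  shows "sigma k (insert x T) = sigma k T + (if k = 0 then 0 else sigma (k - 1) T)"
proof (cases k)
  case 0 then show ?thesis using assms by (simp add: sig_fin)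
next
  case (Suc j) then show ?thesis using assms by (simp add: sig_fin del: add_bit_eq_xor)
qed

lemma anf_sigma: "finite S \<Longrightarrow> anf (sigma k) S = (if card S = k then 1 else 0)"
proof (induction S arbitrary: k rule: finite_induct)
  case empty
  then show ?case by (cases k) (simp_all add: anf_def sig_fin)
next
  case (insert x S)
  have fin: "\<And>T. T \<in> Pow S \<Longrightarrow> finite T \<and> x \<notin> T" using insert.hyps finite_subset by blast
  have "anf (sigma k) (insert x S) = anf (sigma k) S + (\<Sum>T\<in>Pow S. sigma k (insert x T))"
    unfolding anf_def using sum_Pow_insert[OF insert.hyps] .
  also have "(\<Sum>T\<in>Pow S. sigma k (insert x T)) = anf (sigma k) S + (if k = 0 then 0 else anf (sigma (k - 1)) S)"
  proof -
    have "(\<Sum>T\<in>Pow S. sigma k (insert x T)) = (\<Sum>T\<in>Pow S. sigma k T + (if k = 0 then 0 else sigma (k - 1) T))"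
      by (rule sum.cong) (simp_all add: sigma_insert fin)
    also have "\<dots> = (\<Sum>T\<in>Pow S. sigma k T) + (\<Sum>T\<in>Pow S. (if k = 0 then 0 else sigma (k - 1) T))"
      by (simp only: sum.distrib)
    also have "(\<Sum>T\<in>Pow S. (if k = 0 then 0 else sigma (k - 1) T)) = (if k = 0 then 0 else anf (sigma (k - 1)) S)"
      by (cases k) (simp_all add: anf_def del: add_bit_eq_xor)
    finally show ?thesis by (simp add: anf_def del: add_bit_eq_xor)
  qed
  finally have "anf (sigma k) (insert x S) = (if k = 0 then 0 else anf (sigma (k - 1)) S)"
    by (simp add: add.assoc[symmetric] bit_self del: add_bit_eq_xor)
  then show ?case using insert by auto
qed

lemma anf_add: "anf (\<lambda>X. h1 X + h2 X) S = anf h1 S + anf h2 S"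
  by (simp add: anf_def sum.distrib del: add_bit_eq_xor)

lemma anf_comb:
  assumes "finite S" "finite A"
  shows "anf (\<lambda>X. \<Sum>s\<in>A. a s * sigma (k s) X) S = (\<Sum>s\<in>A. a s * (if card S = k s then 1 else 0))"
proof -
  have "anf (\<lambda>X. \<Sum>s\<in>A. a s * sigma (k s) X) S = (\<Sum>s\<in>A. a s * anf (sigma (k s)) S)"
    unfolding anf_def by (simp add: sum.swap[of _ "Pow S"] sum_distrib_left del: mult_bit_eq_and add_bit_eq_xor)
  then show ?thesis using assms by (simp add: anf_sigma del: mult_bit_eq_and add_bit_eq_xor)
qed

lemma anf_cong: "(\<And>T. T \<subseteq> S \<Longrightarrow> h T = h' T) \<Longrightarrow> anf h S = anf h' S"
  unfolding anf_def by (rule sum.cong) auto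

lemma anf_deg_cong: "(\<And>X. X \<subseteq> {0..<n} \<Longrightarrow> h X = h' X) \<Longrightarrow> anf_deg n h = anf_deg n h'"
proof -
  assume a: "\<And>X. X \<subseteq> {0..<n} \<Longrightarrow> h X = h' X"
  have "\<And>S. S \<subseteq> {0..<n} \<Longrightarrow> anf h S = anf h' S" by (rule anf_cong) (use a in auto)
  then show ?thesis unfolding anf_deg_def
    by (smt (verit, best) Collect_cong)
qed

lemma deg_le:
  assumes "\<And>S. S \<subseteq> {0..<n} \<Longrightarrow> anf h S \<noteq> 0 \<Longrightarrow> int (card S) \<le> d" "-1 \<le> d"
  shows "anf_deg n h \<le> d"
proof (cases "\<forall>S\<subseteq>{0..<n}. anf h S = 0")
  case True then show ?thesis using assms by (simp add: anf_deg_def)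
next
  case False
  let ?M = "{card S | S. S \<subseteq> {0..<n} \<and> anf h S \<noteq> 0}"
  have fin: "finite ?M"
    by (rule finite_subset[of _ "{0..n}"]) (auto intro: card_mono[of "{0..<n}", simplified])
  have ne: "?M \<noteq> {}" using False by auto
  have "Max ?M \<in> ?M" using fin ne by (rule Max_in)
  then obtain S where S: "S \<subseteq> {0..<n}" "anf h S \<noteq> 0" "Max ?M = card S" by auto
  have "anf_deg n h = int (Max ?M)" unfolding anf_deg_def by (rule if_not_P[OF False])
  then show ?thesis using assms(1)[OF S(1,2)] S(3) by simp
qed

lemma deg_eq:
  assumes "\<And>S. S \<subseteq> {0..<n} \<Longrightarrow> anf h S \<noteq> 0 \<Longrightarrow> card S \<le> k"
    and "S0 \<subseteq> {0..<n}" "card S0 = k" "anf h S0 \<noteq> 0"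
  shows "anf_deg n h = int k"
proof -
  let ?M = "{card S | S. S \<subseteq> {0..<n} \<and> anf h S \<noteq> 0}"
  have fin: "finite ?M"
    by (rule finite_subset[of _ "{0..n}"]) (auto intro: card_mono[of "{0..<n}", simplified])
  have "Max ?M = k"
    by (rule Max_eqI[OF fin]) (use assms in auto)
  moreover have "\<not> (\<forall>S\<subseteq>{0..<n}. anf h S = 0)" using assms by auto
  ultimately show ?thesis by (simp add: anf_deg_def)
qed
lemma split_sum: "(\<Sum>i\<le>2*(t::nat). F i) = (\<Sum>s<t. F (2*s) + F (2*s+1)) + (F (2*t) :: 'a::comm_monoid_add)"
proof (induction t)
  case 0 then show ?case by simp
next
  case (Suc t)
  have "{..2 * Suc t} = insert (2*t+2) (insert (2*t+1) {..2*t})" by auto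
  then have "(\<Sum>i\<le>2*Suc t. F i) = F (2*t+2) + (F (2*t+1) + (\<Sum>i\<le>2*t. F i))" by simp
  then show ?case using Suc by (simp add: algebra_simps)
qed

lemma sum_nz: "sum h A \<noteq> 0 \<Longrightarrow> \<exists>s\<in>A. h s \<noteq> 0"
  by (meson sum.neutral)

lemma greatest_props:
  assumes "s0 < (t::nat)" "P s0"
  shows "(GREATEST s. s < t \<and> P s) < t \<and> P (GREATEST s. s < t \<and> P s)
     \<and> (\<forall>s. s < t \<and> P s \<longrightarrow> s \<le> (GREATEST s. s < t \<and> P s))"
proof -
  have b: "\<forall>y. y < t \<and> P y \<longrightarrow> y \<le> t" by auto
  have "(\<lambda>s. s < t \<and> P s) (GREATEST s. s < t \<and> P s)"
    by (rule GreatestI_nat[of _ s0 t]) (use assms b in auto)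
  moreover have "\<forall>s. s < t \<and> P s \<longrightarrow> s \<le> (GREATEST s. s < t \<and> P s)"
    using Greatest_le_nat[of "\<lambda>s. s < t \<and> P s" _ t] b by blast
  ultimately show ?thesis by blast
qed

theorem theorem3:
  fixes n t :: nat and lam :: "nat \<Rightarrow> bit" and f g :: "nat set \<Rightarrow> bit"
  assumes "2 * t + 1 \<le> n"
    and f_def: "f = (\<lambda>X. sigma (2 * t + 1) X + (\<Sum>i\<le>2 * t. lam i * sigma i X))"
    and g_def: "g = (\<lambda>X. sigma 1 X + lam (2 * t) + 1)"
  shows "anf_deg n (\<lambda>X. g X * f X) \<le> 2 * int t - 1
    \<and> (lam (2 * t) = 0 \<longrightarrow>
         ((\<forall>s<t. lam (2 * s) = 0) \<longrightarrow> (\<forall>X\<subseteq>{0..<n}. (sigma 1 X + 1) * f X = 0))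
       \<and> (\<not> (\<forall>s<t. lam (2 * s) = 0) \<longrightarrow>
            anf_deg n (\<lambda>X. (sigma 1 X + 1) * f X)
              = 2 * int (GREATEST s. s < t \<and> lam (2 * s) = 1) + 1))
    \<and> (lam (2 * t) = 1 \<longrightarrow>
         ((\<forall>s<t. lam (2 * s) = lam (2 * s + 1)) \<longrightarrow> (\<forall>X\<subseteq>{0..<n}. sigma 1 X * f X = 0))
       \<and> (\<not> (\<forall>s<t. lam (2 * s) = lam (2 * s + 1)) \<longrightarrow>
            anf_deg n (\<lambda>X. sigma 1 X * f X)
              = 2 * int (GREATEST s. s < t \<and> lam (2 * s) + lam (2 * s + 1) = 1) + 1))"
proof -
  define c where "c = lam (2*t)"
  define Q where "Q = (\<lambda>X. \<Sum>s<t. (lam (2*s) + lam (2*s+1)) * sigma (2*s+1) X)"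
  define E where "E = (\<lambda>X. (\<Sum>s<t. lam (2*s) * sigma (2*s) X) + (\<Sum>s<t. lam (2*s) * sigma (2*s+1) X))"
  define P where "P = (\<lambda>X. \<Sum>s<t. lam (2*s) * sigma (2*s) X + lam (2*s+1) * sigma (2*s+1) X)"
  have fX: "f X = sigma (2*t+1) X + P X + c * sigma (2*t) X" for X
    unfolding f_def P_def c_def by (simp add: split_sum add.assoc del: add_bit_eq_xor mult_bit_eq_and)
  have s1P: "sigma 1 X * P X = Q X" if "finite X" for X
    unfolding P_def Q_def sum_distrib_left
  proof (rule sum.cong)
    fix s
    have a: "sigma 1 X * (lam (2*s) * sigma (2*s) X) = lam (2*s) * sigma (2*s+1) X"
      using s1_even[OF that, of s] by (metis mult.left_commute)
    have b: "sigma 1 X * (lam (2*s+1) * sigma (2*s+1) X) = lam (2*s+1) * sigma (2*s+1) X"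
      using s1_odd[OF that, of s] by (metis mult.left_commute)
    show "sigma 1 X * (lam (2*s) * sigma (2*s) X + lam (2*s+1) * sigma (2*s+1) X) = (lam (2*s) + lam (2*s+1)) * sigma (2*s+1) X"
      by (simp only: distrib_left distrib_right a b)
  qed simp
  have QPE: "Q X + P X = E X" for X
  proof -
    have "Q X + P X = (\<Sum>s<t. (lam (2*s) + lam (2*s+1)) * sigma (2*s+1) X + (lam (2*s) * sigma (2*s) X + lam (2*s+1) * sigma (2*s+1) X))"
      unfolding Q_def P_def by (simp only: sum.distrib)
    also have "\<dots> = (\<Sum>s<t. lam (2*s) * sigma (2*s) X + lam (2*s) * sigma (2*s+1) X)"
    proof (rule sum.cong)
      fix s
      show "(lam (2*s) + lam (2*s+1)) * sigma (2*s+1) X + (lam (2*s) * sigma (2*s) X + lam (2*s+1) * sigma (2*s+1) X)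
          = lam (2*s) * sigma (2*s) X + lam (2*s) * sigma (2*s+1) X"
        by (cases "lam (2*s)"; cases "lam (2*s+1)"; cases "sigma (2*s) X"; cases "sigma (2*s+1) X") simp_all
    qed simp
    also have "\<dots> = E X" unfolding E_def by (simp only: sum.distrib)
    finally show ?thesis .
  qed
  have keyQ: "sigma 1 X * f X = Q X" if "c = 1" "finite X" for X
  proof -
    have "sigma 1 X * f X = sigma 1 X * sigma (2*t+1) X + sigma 1 X * P X + sigma 1 X * sigma (2*t) X"
      unfolding fX using that(1) by (simp add: distrib_left del: add_bit_eq_xor mult_bit_eq_and)
    also have "\<dots> = sigma (2*t+1) X + Q X + sigma (2*t+1) X"
      using that(2) by (simp only: s1_even s1_odd s1P)
    also have "\<dots> = Q X" by (cases "sigma (2*t+1) X"; cases "Q X") simp_all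
    finally show ?thesis .
  qed
  have keyE: "(sigma 1 X + 1) * f X = E X" if "c = 0" "finite X" for X
  proof -
    have "(sigma 1 X + 1) * f X = sigma 1 X * sigma (2*t+1) X + sigma 1 X * P X + (sigma (2*t+1) X + P X)"
      unfolding fX using that(1) by (simp add: algebra_simps del: add_bit_eq_xor mult_bit_eq_and)
    also have "\<dots> = sigma (2*t+1) X + Q X + (sigma (2*t+1) X + P X)"
      using that(2) by (simp only: s1_even s1_odd s1P)
    also have "\<dots> = Q X + P X" by (cases "sigma (2*t+1) X"; cases "Q X"; cases "P X") simp_all
    finally show ?thesis using QPE by simp
  qed
  have gQ: "g X = sigma 1 X" if "c = 1" for X
    unfolding g_def using that c_def by (simp del: add_bit_eq_xor)
  have gE: "g X = sigma 1 X + 1" if "c = 0" for X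
    unfolding g_def using that c_def by (simp del: add_bit_eq_xor)
  have anfQ: "anf Q S = (\<Sum>s<t. (lam (2*s) + lam (2*s+1)) * (if card S = 2*s+1 then 1 else 0))" if "finite S" for S
    unfolding Q_def by (rule anf_comb[OF that]) simp
  have anfE: "anf E S = (\<Sum>s<t. lam (2*s) * (if card S = 2*s then 1 else 0)) + (\<Sum>s<t. lam (2*s) * (if card S = 2*s+1 then 1 else 0))" if "finite S" for S
    unfolding E_def anf_add by (simp only: anf_comb[OF that finite_lessThan])
  have Qnz: "\<exists>s<t. lam (2*s) + lam (2*s+1) = 1 \<and> card S = 2*s+1" if "finite S" "anf Q S \<noteq> 0" for S
  proof -
    from sum_nz[OF that(2)[unfolded anfQ[OF that(1)]]] obtain s where
      "s < t" "(lam (2*s) + lam (2*s+1)) * (if card S = 2*s+1 then 1 else 0) \<noteq> 0" by auto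
    then show ?thesis by (auto split: if_splits simp del: add_bit_eq_xor)
  qed
  have Enz: "\<exists>s<t. lam (2*s) = 1 \<and> card S \<le> 2*s+1" if "finite S" "anf E S \<noteq> 0" for S
  proof -
    have "(\<Sum>s<t. lam (2*s) * (if card S = 2*s then 1 else 0)) \<noteq> 0 \<or> (\<Sum>s<t. lam (2*s) * (if card S = 2*s+1 then 1 else 0)) \<noteq> 0"
      using that(2) unfolding anfE[OF that(1)] by (metis add.right_neutral)
    then show ?thesis
    proof
      assume "(\<Sum>s<t. lam (2*s) * (if card S = 2*s then 1 else 0)) \<noteq> 0"
      from sum_nz[OF this] show ?thesis by (auto split: if_splits)
    next
      assume "(\<Sum>s<t. lam (2*s) * (if card S = 2*s+1 then 1 else 0)) \<noteq> 0"
      from sum_nz[OF this] show ?thesis by (auto split: if_splits)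
    qed
  qed
  have finn: "X \<subseteq> {0..<n} \<Longrightarrow> finite X" for X using finite_subset by blast
  have degQ: "anf_deg n Q \<le> 2 * int t - 1"
  proof (rule deg_le)
    fix S assume "S \<subseteq> {0..<n}" "anf Q S \<noteq> 0"
    then obtain s where "s < t" "card S = 2*s+1" using Qnz finn by blast
    then show "int (card S) \<le> 2 * int t - 1" by simp
  qed simp
  have degE: "anf_deg n E \<le> 2 * int t - 1"
  proof (rule deg_le)
    fix S assume "S \<subseteq> {0..<n}" "anf E S \<noteq> 0"
    then obtain s where "s < t" "card S \<le> 2*s+1" using Enz finn by blast
    then show "int (card S) \<le> 2 * int t - 1" by simp
  qed simp
  have part1: "anf_deg n (\<lambda>X. g X * f X) \<le> 2 * int t - 1"
  proof (cases "c = 0")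
    case True
    have "anf_deg n (\<lambda>X. g X * f X) = anf_deg n E"
      by (rule anf_deg_cong) (metis gE[OF True] keyE[OF True] finn)
    then show ?thesis using degE by simp
  next
    case False
    then have c1: "c = 1" by simp
    have "anf_deg n (\<lambda>X. g X * f X) = anf_deg n Q"
      by (rule anf_deg_cong) (metis gQ[OF c1] keyQ[OF c1] finn)
    then show ?thesis using degQ by simp
  qed
  have partA: "((\<forall>s<t. lam (2 * s) = 0) \<longrightarrow> (\<forall>X\<subseteq>{0..<n}. (sigma 1 X + 1) * f X = 0))
       \<and> (\<not> (\<forall>s<t. lam (2 * s) = 0) \<longrightarrow>
            anf_deg n (\<lambda>X. (sigma 1 X + 1) * f X)
              = 2 * int (GREATEST s. s < t \<and> lam (2 * s) = 1) + 1)" if c0: "c = 0"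
  proof (intro conjI impI allI)
    fix X assume "\<forall>s<t. lam (2 * s) = 0" "X \<subseteq> {0..<n}"
    then show "(sigma 1 X + 1) * f X = 0" using keyE[OF c0] finn by (simp add: E_def)
  next
    assume "\<not> (\<forall>s<t. lam (2 * s) = 0)"
    then obtain s0 where s0: "s0 < t" "lam (2*s0) = 1" by auto
    define G where "G = (GREATEST s. s < t \<and> lam (2 * s) = 1)"
    have G: "G < t" "lam (2*G) = 1" "\<And>s. s < t \<Longrightarrow> lam (2*s) = 1 \<Longrightarrow> s \<le> G"
      using greatest_props[of s0 t "\<lambda>s. lam (2*s) = 1", OF s0] unfolding G_def by auto
    have "anf_deg n (\<lambda>X. (sigma 1 X + 1) * f X) = anf_deg n E"
      by (rule anf_deg_cong) (metis keyE[OF c0] finn)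
    also have "anf_deg n E = int (2*G+1)"
    proof (rule deg_eq)
      fix S assume "S \<subseteq> {0..<n}" "anf E S \<noteq> 0"
      then obtain s where "s < t" "lam (2*s) = 1" "card S \<le> 2*s+1" using Enz finn by blast
      then show "card S \<le> 2*G+1" using G(3)[of s] by simp
    next
      show "{0..<2*G+1} \<subseteq> {0..<n}" using G(1) assms(1) by auto
      show "card {0..<2*G+1} = 2*G+1" by simp
      have e1: "(\<Sum>s<t. lam (2*s) * (if 2*G+1 = 2*s then 1 else 0)) = 0"
      proof (rule sum.neutral)
        have "\<forall>x. 2*G+1 \<noteq> 2*x" by presburger
        then show "\<forall>x\<in>{..<t}. lam (2*x) * (if 2*G+1 = 2*x then 1 else 0) = 0" by simp
      qed
      have e2: "(\<Sum>s<t. lam (2*s) * (if 2*G+1 = 2*s+1 then 1 else 0)) = (\<Sum>s<t. if s = G then lam (2*s) else 0)"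
        by (rule sum.cong) auto
      show "anf E {0..<2*G+1} \<noteq> 0"
        using G(1,2) by (simp only: anfE[of "{0..<2*G+1}"] finite_atLeastLessThan card_atLeastLessThan diff_zero e1 e2) simp
    qed
    finally show "anf_deg n (\<lambda>X. (sigma 1 X + 1) * f X) = 2 * int (GREATEST s. s < t \<and> lam (2 * s) = 1) + 1"
      unfolding G_def by simp
  qed
  have partB: "((\<forall>s<t. lam (2 * s) = lam (2 * s + 1)) \<longrightarrow> (\<forall>X\<subseteq>{0..<n}. sigma 1 X * f X = 0))
       \<and> (\<not> (\<forall>s<t. lam (2 * s) = lam (2 * s + 1)) \<longrightarrow>
            anf_deg n (\<lambda>X. sigma 1 X * f X)
              = 2 * int (GREATEST s. s < t \<and> lam (2 * s) + lam (2 * s + 1) = 1) + 1)" if c1: "c = 1"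
  proof (intro conjI impI allI)
    fix X assume a: "\<forall>s<t. lam (2 * s) = lam (2 * s + 1)" and X: "X \<subseteq> {0..<n}"
    have "Q X = 0" unfolding Q_def
    proof (rule sum.neutral)
      show "\<forall>s\<in>{..<t}. (lam (2*s) + lam (2*s+1)) * sigma (2*s+1) X = 0"
      proof
        fix s assume "s \<in> {..<t}"
        then have "lam (2*s) = lam (2*s+1)" using a by simp
        then show "(lam (2*s) + lam (2*s+1)) * sigma (2*s+1) X = 0" by (simp add: bit_self del: add_bit_eq_xor)
      qed
    qed
    then show "sigma 1 X * f X = 0" using keyQ[OF c1 finn[OF X]] by simp
  next
    assume "\<not> (\<forall>s<t. lam (2 * s) = lam (2 * s + 1))"
    then obtain s0 where s00: "s0 < t" "lam (2*s0) \<noteq> lam (2*s0+1)" by blast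
    have s01: "lam (2*s0) + lam (2*s0+1) = 1"
      using s00(2) by (cases "lam (2*s0)"; cases "lam (2*s0+1)"; simp)
    note s0 = s00(1) s01
    define G where "G = (GREATEST s. s < t \<and> lam (2 * s) + lam (2 * s + 1) = 1)"
    have G: "G < t" "lam (2*G) + lam (2*G+1) = 1" "\<And>s. s < t \<Longrightarrow> lam (2*s) + lam (2*s+1) = 1 \<Longrightarrow> s \<le> G"
      using greatest_props[of s0 t "\<lambda>s. lam (2*s) + lam (2*s+1) = 1", OF s0] unfolding G_def by blast+
    have "anf_deg n (\<lambda>X. sigma 1 X * f X) = anf_deg n Q"
      by (rule anf_deg_cong) (metis keyQ[OF c1] finn)
    also have "anf_deg n Q = int (2*G+1)"
    proof (rule deg_eq)
      fix S assume "S \<subseteq> {0..<n}" "anf Q S \<noteq> 0"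
      then obtain s where "s < t" "lam (2*s) + lam (2*s+1) = 1" "card S = 2*s+1" using Qnz finn by blast
      then show "card S \<le> 2*G+1" using G(3)[of s] by simp
    next
      show "{0..<2*G+1} \<subseteq> {0..<n}" using G(1) assms(1) by auto
      show "card {0..<2*G+1} = 2*G+1" by simp
      have e2: "(\<Sum>s<t. (lam (2*s) + lam (2*s+1)) * (if 2*G+1 = 2*s+1 then 1 else 0)) = (\<Sum>s<t. if s = G then lam (2*s) + lam (2*s+1) else 0)"
        by (rule sum.cong) (simp_all del: add_bit_eq_xor mult_bit_eq_and)
      show "anf Q {0..<2*G+1} \<noteq> 0"
        using G(1,2) by (simp only: anfQ[of "{0..<2*G+1}"] finite_atLeastLessThan card_atLeastLessThan diff_zero e2) simp
    qed
    finally show "anf_deg n (\<lambda>X. sigma 1 X * f X) = 2 * int (GREATEST s. s < t \<and> lam (2 * s) + lam (2 * s + 1) = 1) + 1"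
      unfolding G_def by simp
  qed
  note pA = partA[unfolded c_def]
  note pB = partB[unfolded c_def]
  show ?thesis
    apply (rule conjI[OF part1])
    apply (rule conjI)
     apply (rule impI)
     apply (erule pA)
    apply (rule impI)
    apply (erule pB)
    done
qed
end
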